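(* Fix $k\in\mathcal K$ and let $\hat P_k$ and $V$ be as in the context. For every $d>0$ there exists a nonzero measure $\nu$ on $\mathbb R^k\times\mathbb R^p\times(0,\infty)$ such that $\hat P_k((\alpha,\beta,\tau),\cdot)\ge\nu(\cdot)$ whenever $V(\alpha,\beta,\tau)\le d$.
   Context: Bayesian autoregression with Laplace errors. Data: integers $N,p\ge1$, $k_{\max}\ge0$, known $x_i\in\mathbb R^p$ and observed $y_i\in\mathbb R$ for $i=1,\dots,N$, and known starting values $y_{-k_{\max}+1},\dots,y_0$; $y=(y_1,\dots,y_N)^\top$. $\mathcal K=\{0,1,\dots,k_{\max}\}$. For $k\in\mathcal K$, $w_{i,k}=(y_{i-1},\dots,y_{i-k})^\top$ and $W(k)$ is the $N\times(p+k)$ matrix with $i$th row $(x_i^\top,w_{i,k}^\top)$. Hyperparameter $\sigma>0$. $V(\alpha,\beta,\tau)=\tau^{-1}\sum_{i=1}^N(y_i-x_i^\top\beta-w_{i,k}^\top\alpha)^2$. For $(\alpha,\beta,\tau)$ with $r_i=y_i-x_i^\top\beta-w_{i,k}^\top\alpha$, $f_U(u\mid k,\alpha,\beta,\tau,y)=\prod_{i=1}^N(8\pi u_i^3)^{-1/2}\exp\big(-u_ir_i^2/(2\tau)+|r_i|/(2\sqrt\tau)-1/(8u_i)\big)$ on $(0,\infty)^N$. $\hat P_k$: from $(\alpha,\beta,\tau)$, (1) draw $u'\sim f_U(\cdot\mid k,\alpha,\beta,\tau,y)$, set $Q=\mathrm{diag}(u')$, $M=W(k)^\top QW(k)+\sigma^{-2}I_{p+k}$;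 (2) draw $\tau'$ inverse gamma with shape $N/2$ and scale $[y^\top Qy-y^\top QW(k)M^{-1}W(k)^\top Qy]/2$; (3) draw $(\beta'^\top,\alpha'^\top)^\top\sim N_{p+k}(M^{-1}W(k)^\top Qy,\tau'M^{-1})$; new state $(\alpha',\beta',\tau')$. *)

theory Defs
  imports "HOL-Probability.Probability"
          "Jordan_Normal_Form.Gauss_Jordan_Elimination"
          "Jordan_Normal_Form.Determinant"
begin

text \<open>Data: N, p, known covariates x i j (i = 1..N, j < p), observations and starting
values y t (t = -kmax+1 .. N, indexed by integers), hyperparameter sigma.
A state (alpha, beta, tau) is an element of
R^k x R^p x (0,inf), represented with extensional functions on index sets {..<k}, {..<p}.\<close>

definition state_space :: "nat \<Rightarrow> nat \<Rightarrow> ((nat \<Rightarrow> real) \<times> (nat \<Rightarrow> real) \<times> real) measure" where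
  "state_space p k = (PiM {..<k} (\<lambda>_. lborel)) \<Otimes>\<^sub>M (PiM {..<p} (\<lambda>_. lborel))
                      \<Otimes>\<^sub>M restrict_space lborel {0<..}"

definition resid :: "nat \<Rightarrow> (nat \<Rightarrow> nat \<Rightarrow> real) \<Rightarrow> (int \<Rightarrow> real) \<Rightarrow> nat
    \<Rightarrow> (nat \<Rightarrow> real) \<Rightarrow> (nat \<Rightarrow> real) \<Rightarrow> nat \<Rightarrow> real" where
  "resid p x y k \<alpha> \<beta> i = y (int i) - (\<Sum>j<p. x i j * \<beta> j) - (\<Sum>l<k. y (int i - int l - 1) * \<alpha> l)"

definition V_fun :: "nat \<Rightarrow> nat \<Rightarrow> (nat \<Rightarrow> nat \<Rightarrow> real) \<Rightarrow> (int \<Rightarrow> real) \<Rightarrow> nat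
    \<Rightarrow> (nat \<Rightarrow> real) \<times> (nat \<Rightarrow> real) \<times> real \<Rightarrow> real" where
  "V_fun N p x y k s = (case s of (\<alpha>, \<beta>, \<tau>) \<Rightarrow>
      (1 / \<tau>) * (\<Sum>i=1..N. (resid p x y k \<alpha> \<beta> i)\<^sup>2))"

definition fU :: "nat \<Rightarrow> nat \<Rightarrow> (nat \<Rightarrow> nat \<Rightarrow> real) \<Rightarrow> (int \<Rightarrow> real) \<Rightarrow> nat
    \<Rightarrow> (nat \<Rightarrow> real) \<times> (nat \<Rightarrow> real) \<times> real \<Rightarrow> (nat \<Rightarrow> real) \<Rightarrow> real" where
  "fU N p x y k s u = (case s of (\<alpha>, \<beta>, \<tau>) \<Rightarrow>
     (\<Prod>i=1..N. if u i > 0 then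
        (8 * pi * (u i)^3) powr (-1/2) *
        exp (- u i * (resid p x y k \<alpha> \<beta> i)\<^sup>2 / (2 * \<tau>)
             + \<bar>resid p x y k \<alpha> \<beta> i\<bar> / (2 * sqrt \<tau>) - 1 / (8 * u i))
      else 0))"

text \<open>Design matrix W(k): N x (p+k), i-th row (x_i^T, y_{i-1}, ..., y_{i-k}) (rows 0-based).\<close>
definition Wmat :: "nat \<Rightarrow> nat \<Rightarrow> (nat \<Rightarrow> nat \<Rightarrow> real) \<Rightarrow> (int \<Rightarrow> real) \<Rightarrow> nat \<Rightarrow> real mat" where
  "Wmat N p x y k = mat N (p + k)
     (\<lambda>(i, j). if j < p then x (i + 1) j else y (int i - int (j - p)))"

definition yvec :: "nat \<Rightarrow> (int \<Rightarrow> real) \<Rightarrow> real vec" where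
  "yvec N y = vec N (\<lambda>i. y (int i + 1))"

definition Qmat :: "nat \<Rightarrow> (nat \<Rightarrow> real) \<Rightarrow> real mat" where
  "Qmat N u = mat N N (\<lambda>(i, j). if i = j then u (i + 1) else 0)"

definition Mmat :: "nat \<Rightarrow> nat \<Rightarrow> (nat \<Rightarrow> nat \<Rightarrow> real) \<Rightarrow> (int \<Rightarrow> real) \<Rightarrow> real \<Rightarrow> nat
    \<Rightarrow> (nat \<Rightarrow> real) \<Rightarrow> real mat" where
  "Mmat N p x y \<sigma> k u = transpose_mat (Wmat N p x y k) * Qmat N u * Wmat N p x y k
      + (1 / \<sigma>\<^sup>2) \<cdot>\<^sub>m 1\<^sub>m (p + k)"

definition Minv :: "nat \<Rightarrow> nat \<Rightarrow> (nat \<Rightarrow> nat \<Rightarrow> real) \<Rightarrow> (int \<Rightarrow> real) \<Rightarrow> real \<Rightarrow> nat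
    \<Rightarrow> (nat \<Rightarrow> real) \<Rightarrow> real mat" where
  "Minv N p x y \<sigma> k u = the (mat_inverse (Mmat N p x y \<sigma> k u))"

definition post_mean :: "nat \<Rightarrow> nat \<Rightarrow> (nat \<Rightarrow> nat \<Rightarrow> real) \<Rightarrow> (int \<Rightarrow> real) \<Rightarrow> real \<Rightarrow> nat
    \<Rightarrow> (nat \<Rightarrow> real) \<Rightarrow> real vec" where
  "post_mean N p x y \<sigma> k u =
     Minv N p x y \<sigma> k u *\<^sub>v (transpose_mat (Wmat N p x y k) *\<^sub>v (Qmat N u *\<^sub>v yvec N y))"

definition ig_scale :: "nat \<Rightarrow> nat \<Rightarrow> (nat \<Rightarrow> nat \<Rightarrow> real) \<Rightarrow> (int \<Rightarrow> real) \<Rightarrow> real \<Rightarrow> nat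
    \<Rightarrow> (nat \<Rightarrow> real) \<Rightarrow> real" where
  "ig_scale N p x y \<sigma> k u =
     (let Qy = Qmat N u *\<^sub>v yvec N y;
          b = transpose_mat (Wmat N p x y k) *\<^sub>v Qy
      in (scalar_prod (yvec N y) Qy - scalar_prod b (Minv N p x y \<sigma> k u *\<^sub>v b)) / 2)"

definition inv_gamma_density :: "real \<Rightarrow> real \<Rightarrow> real \<Rightarrow> real" where
  "inv_gamma_density a b t =
     (if t > 0 then b powr a / Gamma a * t powr (- a - 1) * exp (- b / t) else 0)"

definition mvnormal_density :: "nat \<Rightarrow> real vec \<Rightarrow> real mat \<Rightarrow> real vec \<Rightarrow> real" where
  "mvnormal_density d m S z =
     (2 * pi) powr (- real d / 2) * det S powr (-1/2)
     * exp (- scalar_prod (z - m) (the (mat_inverse S) *\<^sub>v (z - m)) / 2)"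

text \<open>The Gibbs kernel hat P_k. theta = (beta^T, alpha^T)^T in R^{p+k} is drawn from
N_{p+k}(M^{-1} W^T Q y, tau' M^{-1}); the new state is (alpha', beta', tau').\<close>
definition Pk :: "nat \<Rightarrow> nat \<Rightarrow> (nat \<Rightarrow> nat \<Rightarrow> real) \<Rightarrow> (int \<Rightarrow> real) \<Rightarrow> real \<Rightarrow> nat
    \<Rightarrow> (nat \<Rightarrow> real) \<times> (nat \<Rightarrow> real) \<times> real
    \<Rightarrow> ((nat \<Rightarrow> real) \<times> (nat \<Rightarrow> real) \<times> real) set \<Rightarrow> ennreal" where
  "Pk N p x y \<sigma> k s A =
     (\<integral>\<^sup>+ u. ennreal (fU N p x y k s u) *
        (\<integral>\<^sup>+ \<tau>'. ennreal (inv_gamma_density (real N / 2) (ig_scale N p x y \<sigma> k u) \<tau>') *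
           (\<integral>\<^sup>+ \<theta>. ennreal (mvnormal_density (p + k) (post_mean N p x y \<sigma> k u)
                                   (\<tau>' \<cdot>\<^sub>m Minv N p x y \<sigma> k u) (vec (p + k) \<theta>)) *
                 indicator A (restrict (\<lambda>l. \<theta> (p + l)) {..<k}, restrict \<theta> {..<p}, \<tau>')
              \<partial>(PiM {..<p + k} (\<lambda>_. lborel)))
         \<partial>lborel)
      \<partial>(PiM {1..N} (\<lambda>_. lborel)))"

end

theory Submission
  imports Defs
begin

definition mmeas :: "'a measure \<Rightarrow> ('a \<Rightarrow> real mat) \<Rightarrow> nat \<Rightarrow> nat \<Rightarrow> bool" where
  "mmeas M F n m \<longleftrightarrow> (\<forall>z\<in>space M. F z \<in> carrier_mat n m) \<and>
     (\<forall>i<n. \<forall>j<m. (\<lambda>z. F z $$ (i,j)) \<in> borel_measurable M)"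

definition vmeas :: "'a measure \<Rightarrow> ('a \<Rightarrow> real Matrix.vec) \<Rightarrow> nat \<Rightarrow> bool" where
  "vmeas M v n \<longleftrightarrow> (\<forall>z\<in>space M. v z \<in> carrier_vec n) \<and>
     (\<forall>i<n. (\<lambda>z. v z $ i) \<in> borel_measurable M)"

lemma mmeas_const: "A \<in> carrier_mat n m \<Longrightarrow> mmeas M (\<lambda>_. A) n m"
  by (auto simp: mmeas_def)

lemma vmeas_const: "v \<in> carrier_vec n \<Longrightarrow> vmeas M (\<lambda>_. v) n"
  by (auto simp: vmeas_def)

lemma mmeas_mat:
  assumes "\<And>i j. i < n \<Longrightarrow> j < m \<Longrightarrow> (\<lambda>z. f z (i,j)) \<in> borel_measurable M"
  shows "mmeas M (\<lambda>z. Matrix.mat n m (f z)) n m"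
  using assms by (auto simp: mmeas_def)

lemma vmeas_vec:
  assumes "\<And>i. i < n \<Longrightarrow> (\<lambda>z. f z i) \<in> borel_measurable M"
  shows "vmeas M (\<lambda>z. Matrix.vec n (f z)) n"
  using assms by (auto simp: vmeas_def)

lemma mmeas_carrier: "mmeas M F n m \<Longrightarrow> z \<in> space M \<Longrightarrow> F z \<in> carrier_mat n m"
  by (auto simp: mmeas_def)

lemma vmeas_carrier: "vmeas M v n \<Longrightarrow> z \<in> space M \<Longrightarrow> v z \<in> carrier_vec n"
  by (auto simp: vmeas_def)

lemma mmeas_entry: "mmeas M F n m \<Longrightarrow> i < n \<Longrightarrow> j < m \<Longrightarrow> (\<lambda>z. F z $$ (i,j)) \<in> borel_measurable M"
  by (auto simp: mmeas_def)

lemma vmeas_entry: "vmeas M v n \<Longrightarrow> i < n \<Longrightarrow> (\<lambda>z. v z $ i) \<in> borel_measurable M"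
  by (auto simp: vmeas_def)

lemma mmeas_transpose: "mmeas M F n m \<Longrightarrow> mmeas M (\<lambda>z. transpose_mat (F z)) m n"
  unfolding mmeas_def
  apply (intro conjI ballI allI impI)
   apply force
  apply (rule measurable_cong[THEN iffD2, of _ _ "\<lambda>z. F z $$ (_, _)"])
   apply auto
  done

lemma mmeas_mult:
  assumes F: "mmeas M F n m" and G: "mmeas M G m l"
  shows "mmeas M (\<lambda>z. F z * G z) n l"
  unfolding mmeas_def
proof (intro conjI ballI allI impI)
  fix z assume "z \<in> space M" thus "F z * G z \<in> carrier_mat n l"
    using F G by (auto simp: mmeas_def)
next
  fix i j assume ij: "i < n" "j < l"
  have "(\<lambda>z. \<Sum>t\<in>{0..<m}. F z $$ (i,t) * G z $$ (t,j)) \<in> borel_measurable M"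
    using F G ij by (intro borel_measurable_sum borel_measurable_times) (auto simp: mmeas_def)
  moreover have "(F z * G z) $$ (i,j) = (\<Sum>t\<in>{0..<m}. F z $$ (i,t) * G z $$ (t,j))" if z: "z \<in> space M" for z
  proof -
    have "F z \<in> carrier_mat n m" "G z \<in> carrier_mat m l" using F G z by (auto simp: mmeas_def)
    thus ?thesis using ij by (auto simp: scalar_prod_def intro!: sum.cong)
  qed
  ultimately show "(\<lambda>z. (F z * G z) $$ (i,j)) \<in> borel_measurable M"
    by (subst measurable_cong) auto
qed

lemma mmeas_add:
  assumes F: "mmeas M F n m" and G: "mmeas M G n m"
  shows "mmeas M (\<lambda>z. F z + G z) n m"
  unfolding mmeas_def
proof (intro conjI ballI allI impI)
  fix z assume "z \<in> space M" thus "F z + G z \<in> carrier_mat n m"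
    using F G by (auto simp: mmeas_def)
next
  fix i j assume ij: "i < n" "j < m"
  have "(\<lambda>z. F z $$ (i,j) + G z $$ (i,j)) \<in> borel_measurable M"
    using F G ij by (intro borel_measurable_add) (auto simp: mmeas_def)
  moreover have "\<And>z. z \<in> space M \<Longrightarrow> (F z + G z) $$ (i,j) = F z $$ (i,j) + G z $$ (i,j)"
    using F G ij by (auto simp: mmeas_def)
  ultimately show "(\<lambda>z. (F z + G z) $$ (i,j)) \<in> borel_measurable M"
    by (subst measurable_cong) auto
qed

lemma mmeas_smult:
  assumes c: "c \<in> borel_measurable M" and F: "mmeas M F n m"
  shows "mmeas M (\<lambda>z. c z \<cdot>\<^sub>m F z) n m"
  unfolding mmeas_def
proof (intro conjI ballI allI impI)
  fix z assume "z \<in> space M" thus "c z \<cdot>\<^sub>m F z \<in> carrier_mat n m"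
    using F by (auto simp: mmeas_def)
next
  fix i j assume ij: "i < n" "j < m"
  have "(\<lambda>z. c z * F z $$ (i,j)) \<in> borel_measurable M"
    using c F ij by (intro borel_measurable_times) (auto simp: mmeas_def)
  moreover have "\<And>z. z \<in> space M \<Longrightarrow> (c z \<cdot>\<^sub>m F z) $$ (i,j) = c z * F z $$ (i,j)"
    using F ij by (auto simp: mmeas_def)
  ultimately show "(\<lambda>z. (c z \<cdot>\<^sub>m F z) $$ (i,j)) \<in> borel_measurable M"
    by (subst measurable_cong) auto
qed

lemma vmeas_mult:
  assumes F: "mmeas M F n m" and v: "vmeas M v m"
  shows "vmeas M (\<lambda>z. F z *\<^sub>v v z) n"
  unfolding vmeas_def
proof (intro conjI ballI allI impI)
  fix z assume "z \<in> space M" thus "F z *\<^sub>v v z \<in> carrier_vec n"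
    using F v by (auto simp: mmeas_def vmeas_def)
next
  fix i assume i: "i < n"
  have "(\<lambda>z. \<Sum>t\<in>{0..<m}. F z $$ (i,t) * v z $ t) \<in> borel_measurable M"
    using F v i by (intro borel_measurable_sum borel_measurable_times) (auto simp: mmeas_def vmeas_def)
  moreover have "(F z *\<^sub>v v z) $ i = (\<Sum>t\<in>{0..<m}. F z $$ (i,t) * v z $ t)" if z: "z \<in> space M" for z
  proof -
    have "F z \<in> carrier_mat n m" "v z \<in> carrier_vec m" using F v z by (auto simp: mmeas_def vmeas_def)
    thus ?thesis using i by (auto simp: scalar_prod_def intro!: sum.cong)
  qed
  ultimately show "(\<lambda>z. (F z *\<^sub>v v z) $ i) \<in> borel_measurable M"
    by (subst measurable_cong) auto
qed

lemma vmeas_minus: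
  assumes v: "vmeas M v n" and w: "vmeas M w n"
  shows "vmeas M (\<lambda>z. v z - w z) n"
  unfolding vmeas_def
proof (intro conjI ballI allI impI)
  fix z assume "z \<in> space M" thus "v z - w z \<in> carrier_vec n"
    using v w by (auto simp: vmeas_def)
next
  fix i assume i: "i < n"
  have "(\<lambda>z. v z $ i - w z $ i) \<in> borel_measurable M"
    using v w i by (intro borel_measurable_diff) (auto simp: vmeas_def)
  moreover have "\<And>z. z \<in> space M \<Longrightarrow> (v z - w z) $ i = v z $ i - w z $ i"
    using v w i by (auto simp: vmeas_def)
  ultimately show "(\<lambda>z. (v z - w z) $ i) \<in> borel_measurable M"
    by (subst measurable_cong) auto
qed

lemma scalar_prod_meas:
  assumes v: "vmeas M v n" and w: "vmeas M w n"
  shows "(\<lambda>z. scalar_prod (v z) (w z)) \<in> borel_measurable M"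
proof -
  have "(\<lambda>z. \<Sum>t\<in>{0..<n}. v z $ t * w z $ t) \<in> borel_measurable M"
    using v w by (intro borel_measurable_sum borel_measurable_times) (auto simp: vmeas_def)
  moreover have "\<And>z. z \<in> space M \<Longrightarrow> scalar_prod (v z) (w z) = (\<Sum>t\<in>{0..<n}. v z $ t * w z $ t)"
    using v w by (auto simp: vmeas_def scalar_prod_def)
  ultimately show ?thesis by (subst measurable_cong) auto
qed

lemma det_meas:
  assumes F: "mmeas M F n n"
  shows "(\<lambda>z. Determinant.det (F z)) \<in> borel_measurable M"
proof -
  have "(\<lambda>z. \<Sum>p\<in>{p. p permutes {0..<n}}. signof p * (\<Prod>i=0..<n. F z $$ (i, p i))) \<in> borel_measurable M"
  proof (intro borel_measurable_sum borel_measurable_times borel_measurable_prod borel_measurable_const)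
    fix p i assume "p \<in> {p. p permutes {0..<n}}" "i \<in> {0..<n}"
    hence "p i < n" using permutes_in_image by fastforce
    thus "(\<lambda>z. F z $$ (i, p i)) \<in> borel_measurable M"
      using F \<open>i \<in> _\<close> by (auto simp: mmeas_def)
  qed
  moreover have "\<And>z. z \<in> space M \<Longrightarrow> Determinant.det (F z) =
      (\<Sum>p\<in>{p. p permutes {0..<n}}. signof p * (\<Prod>i=0..<n. F z $$ (i, p i)))"
    using F by (intro det_def') (auto simp: mmeas_def)
  ultimately show ?thesis by (subst measurable_cong) auto
qed

lemma mmeas_delete:
  assumes F: "mmeas M F n n" and "i < n" "j < n"
  shows "mmeas M (\<lambda>z. mat_delete (F z) i j) (n - 1) (n - 1)"
  unfolding mmeas_def
proof (intro conjI ballI allI impI)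
  fix z assume "z \<in> space M" thus "mat_delete (F z) i j \<in> carrier_mat (n - 1) (n - 1)"
    using F by (auto simp: mmeas_def mat_delete_def)
next
  fix a b assume ab: "a < n - 1" "b < n - 1"
  let ?a = "if a < i then a else Suc a" and ?b = "if b < j then b else Suc b"
  have "?a < n" "?b < n" using ab by auto
  hence "(\<lambda>z. F z $$ (?a, ?b)) \<in> borel_measurable M" using F by (auto simp: mmeas_def)
  moreover have "\<And>z. z \<in> space M \<Longrightarrow> mat_delete (F z) i j $$ (a,b) = F z $$ (?a, ?b)"
    using F ab by (auto simp: mmeas_def mat_delete_def)
  ultimately show "(\<lambda>z. mat_delete (F z) i j $$ (a,b)) \<in> borel_measurable M"
    by (subst measurable_cong) auto
qed

lemma inverse_formula:
  fixes A :: "real mat"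
  assumes A: "A \<in> carrier_mat n n" and d: "Determinant.det A \<noteq> 0"
  shows "the (mat_inverse A) = (1 / Determinant.det A) \<cdot>\<^sub>m adj_mat A"
proof -
  let ?B = "(1 / Determinant.det A) \<cdot>\<^sub>m adj_mat A"
  have Bc: "?B \<in> carrier_mat n n" using adj_mat(1)[OF A] by auto
  have AB: "A * ?B = 1\<^sub>m n" using adj_mat(2)[OF A] A d adj_mat(1)[OF A]
    apply (simp add: mult_smult_distrib)
    by (intro eq_matI) auto
  have BA: "?B * A = 1\<^sub>m n" using adj_mat(3)[OF A] A d adj_mat(1)[OF A]
    apply (simp add: mult_smult_assoc_mat)
    by (intro eq_matI) auto
  have "A \<in> Units (ring_mat TYPE(real) n (undefined::unit))"
    using AB BA Bc A unfolding Units_def ring_mat_def by auto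
  hence "mat_inverse A \<noteq> None" using mat_inverse(1)[OF A, of "undefined::unit"] by blast
  then obtain C where C: "mat_inverse A = Some C" by auto
  from mat_inverse(2)[OF A C] have AC: "A * C = 1\<^sub>m n" and Cc: "C \<in> carrier_mat n n" by auto
  have "?B = ?B * (A * C)" by (simp add: AC right_mult_one_mat[OF Bc])
  also have "\<dots> = (?B * A) * C" using Bc A Cc by simp
  also have "\<dots> = C" using BA Cc by simp
  finally show ?thesis using C by simp
qed

lemma mmeas_inverse:
  assumes F: "mmeas M F n n" and d: "\<And>z. z \<in> space M \<Longrightarrow> Determinant.det (F z) \<noteq> 0"
  shows "mmeas M (\<lambda>z. the (mat_inverse (F z))) n n"
  unfolding mmeas_def
proof (intro conjI ballI allI impI)
  fix z assume z: "z \<in> space M"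
  thus "the (mat_inverse (F z)) \<in> carrier_mat n n"
    using F d inverse_formula[of "F z" n] adj_mat(1)[of "F z" n] by (auto simp: mmeas_def)
next
  fix i j assume ij: "i < n" "j < n"
  have "(\<lambda>z. (1 / Determinant.det (F z)) * ((- 1) ^ (j + i) * Determinant.det (mat_delete (F z) j i)))
        \<in> borel_measurable M"
    using ij by (intro borel_measurable_times borel_measurable_divide borel_measurable_const
        det_meas[OF F] det_meas[OF mmeas_delete[OF F]])
  moreover have "\<And>z. z \<in> space M \<Longrightarrow> the (mat_inverse (F z)) $$ (i,j) =
     (1 / Determinant.det (F z)) * ((- 1) ^ (j + i) * Determinant.det (mat_delete (F z) j i))"
    using F d ij inverse_formula[of "F z" n for z] adj_mat(1)[of "F z" n for z]
    by (auto simp: mmeas_def adj_mat_def cofactor_def)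
  ultimately show "(\<lambda>z. the (mat_inverse (F z)) $$ (i,j)) \<in> borel_measurable M"
    by (subst measurable_cong) auto
qed

lemma Wmat_carrier[simp]: "Wmat N p x y k \<in> carrier_mat N (p + k)"
  by (simp add: Wmat_def)
lemma Qmat_carrier[simp]: "Qmat N u \<in> carrier_mat N N"
  by (simp add: Qmat_def)
lemma yvec_carrier[simp]: "yvec N y \<in> carrier_vec N"
  by (simp add: yvec_def)
lemma Mmat_carrier[simp]: "Mmat N p x y \<sigma> k u \<in> carrier_mat (p + k) (p + k)"
  by (simp add: Mmat_def)

lemma Q_quad:
  assumes a: "a \<in> carrier_vec N" and c: "c \<in> carrier_vec N"
  shows "scalar_prod a (Qmat N u *\<^sub>v c) = (\<Sum>i<N. u (i+1) * a $ i * c $ i)"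
proof -
  have "(Qmat N u *\<^sub>v c) $ i = u (i+1) * c $ i" if i: "i < N" for i
  proof -
    have "(Qmat N u *\<^sub>v c) $ i = (\<Sum>j=0..<N. (if i = j then u (i+1) else 0) * c $ j)"
      using i c by (simp add: Qmat_def scalar_prod_def)
    also have "\<dots> = (\<Sum>j=0..<N. if j = i then u (i+1) * c $ i else 0)"
      by (intro sum.cong) auto
    also have "\<dots> = u (i+1) * c $ i"
      using i by (simp add: sum.delta)
    finally show ?thesis .
  qed
  hence e: "\<And>i. i \<in> {0..<N} \<Longrightarrow> a $ i * (Qmat N u *\<^sub>v c) $ i = u (i+1) * a $ i * c $ i" by simp
  have "scalar_prod a (Qmat N u *\<^sub>v c) = (\<Sum>i\<in>{0..<N}. a $ i * (Qmat N u *\<^sub>v c) $ i)"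
    by (simp add: scalar_prod_def Qmat_def del: index_mult_mat_vec)
  also have "\<dots> = (\<Sum>i\<in>{0..<N}. u (i+1) * a $ i * c $ i)"
    by (rule sum.cong[OF refl e])
  finally show ?thesis by (simp add: atLeast0LessThan)
qed

lemma self_scalar: "v \<in> carrier_vec n \<Longrightarrow> scalar_prod v (v :: real Matrix.vec) = (\<Sum>i<n. (v $ i)^2)"
  by (simp add: scalar_prod_def atLeast0LessThan power2_eq_square)

lemma self_scalar_pos:
  assumes v: "v \<in> carrier_vec n" and nz: "v \<noteq> 0\<^sub>v n"
  shows "scalar_prod v (v :: real Matrix.vec) > 0"
proof -
  obtain i where i: "i < n" "v $ i \<noteq> 0"
    using nz v by (metis carrier_vecD eq_vecI index_zero_vec(1) index_zero_vec(2))
  have "(v $ i)^2 \<le> (\<Sum>j<n. (v $ j)^2)"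
    using i by (intro member_le_sum) auto
  moreover have "(v $ i)^2 > 0" using i by simp
  ultimately have "(\<Sum>j<n. (v $ j)^2) > 0" by linarith
  thus ?thesis using self_scalar[OF v] by simp
qed

lemma smult_one_mult_vec:
  assumes v: "v \<in> carrier_vec n"
  shows "((c::real) \<cdot>\<^sub>m 1\<^sub>m n) *\<^sub>v v = c \<cdot>\<^sub>v v"
proof (rule eq_vecI)
  fix i assume "i < dim_vec (c \<cdot>\<^sub>v v)"
  hence i: "i < n" using v by simp
  have "((c \<cdot>\<^sub>m 1\<^sub>m n) *\<^sub>v v) $ i = (\<Sum>ia = 0..<n. c * (if ia = i then 1 else 0) * v $ ia)"
    using i v by (simp add: scalar_prod_def)
  also have "\<dots> = (\<Sum>j\<in>{0..<n}. (if j = i then c * v $ i else 0))"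
    by (rule sum.cong) auto
  also have "\<dots> = c * v $ i" using i by (simp add: sum.delta)
  finally show "((c \<cdot>\<^sub>m 1\<^sub>m n) *\<^sub>v v) $ i = (c \<cdot>\<^sub>v v) $ i" using i v by simp
qed (use v in simp)

lemma M_mult:
  assumes v: "v \<in> carrier_vec (p + k)"
  shows "Mmat N p x y \<sigma> k u *\<^sub>v v = transpose_mat (Wmat N p x y k) *\<^sub>v (Qmat N u *\<^sub>v (Wmat N p x y k *\<^sub>v v)) + (1 / \<sigma>\<^sup>2) \<cdot>\<^sub>v v"
proof -
  let ?W = "Wmat N p x y k" and ?Q = "Qmat N u"
  have T: "transpose_mat ?W \<in> carrier_mat (p+k) N" by simp
  have Wv: "?W *\<^sub>v v \<in> carrier_vec N" by (rule mult_mat_vec_carrier[OF Wmat_carrier v])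
  have TQ: "transpose_mat ?W * ?Q \<in> carrier_mat (p+k) N" by (rule mult_carrier_mat[OF T Qmat_carrier])
  have TQW: "transpose_mat ?W * ?Q * ?W \<in> carrier_mat (p+k) (p+k)" by (rule mult_carrier_mat[OF TQ Wmat_carrier])
  have "Mmat N p x y \<sigma> k u *\<^sub>v v = (transpose_mat ?W * ?Q * ?W) *\<^sub>v v + ((1 / \<sigma>\<^sup>2) \<cdot>\<^sub>m 1\<^sub>m (p + k)) *\<^sub>v v"
    unfolding Mmat_def using v TQW by (intro add_mult_distrib_mat_vec) auto
  also have "(transpose_mat ?W * ?Q * ?W) *\<^sub>v v = (transpose_mat ?W * ?Q) *\<^sub>v (?W *\<^sub>v v)"
    by (rule assoc_mult_mat_vec[OF TQ Wmat_carrier v])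
  also have "\<dots> = transpose_mat ?W *\<^sub>v (?Q *\<^sub>v (?W *\<^sub>v v))"
    by (rule assoc_mult_mat_vec[OF T Qmat_carrier Wv])
  also have "((1 / \<sigma>\<^sup>2) \<cdot>\<^sub>m 1\<^sub>m (p + k)) *\<^sub>v v = (1 / \<sigma>\<^sup>2) \<cdot>\<^sub>v v"
    using v by (rule smult_one_mult_vec)
  finally show ?thesis .
qed

lemma M_quad:
  assumes v: "v \<in> carrier_vec (p + k)"
  shows "scalar_prod v (Mmat N p x y \<sigma> k u *\<^sub>v v) =
     (\<Sum>i<N. u (i+1) * ((Wmat N p x y k *\<^sub>v v) $ i)^2) + (1 / \<sigma>\<^sup>2) * scalar_prod v v"
proof -
  let ?W = "Wmat N p x y k" and ?Q = "Qmat N u"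
  have Wv: "?W *\<^sub>v v \<in> carrier_vec N" by (rule mult_mat_vec_carrier[OF Wmat_carrier v])
  have QWv: "?Q *\<^sub>v (?W *\<^sub>v v) \<in> carrier_vec N" by (rule mult_mat_vec_carrier[OF Qmat_carrier Wv])
  have TQWv: "transpose_mat ?W *\<^sub>v (?Q *\<^sub>v (?W *\<^sub>v v)) \<in> carrier_vec (p+k)"
    by (rule mult_mat_vec_carrier[OF _ QWv]) simp
  have "scalar_prod v (Mmat N p x y \<sigma> k u *\<^sub>v v) =
     scalar_prod v (transpose_mat ?W *\<^sub>v (?Q *\<^sub>v (?W *\<^sub>v v))) + scalar_prod v ((1 / \<sigma>\<^sup>2) \<cdot>\<^sub>v v)"
    unfolding M_mult[OF v] using v TQWv by (intro scalar_prod_add_distrib) auto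
  also have "scalar_prod v (transpose_mat ?W *\<^sub>v (?Q *\<^sub>v (?W *\<^sub>v v)))
      = scalar_prod (transpose_mat ?W *\<^sub>v (?Q *\<^sub>v (?W *\<^sub>v v))) v"
    using v TQWv by (intro comm_scalar_prod) auto
  also have "\<dots> = scalar_prod (?Q *\<^sub>v (?W *\<^sub>v v)) (?W *\<^sub>v v)"
    by (rule transpose_vec_mult_scalar[OF Wmat_carrier v QWv])
  also have "\<dots> = scalar_prod (?W *\<^sub>v v) (?Q *\<^sub>v (?W *\<^sub>v v))"
    using Wv QWv by (intro comm_scalar_prod) auto
  also have "\<dots> = (\<Sum>i<N. u (i+1) * ((?W *\<^sub>v v) $ i)^2)"
    using Wv by (simp add: Q_quad power2_eq_square mult.assoc)
  also have "scalar_prod v ((1 / \<sigma>\<^sup>2) \<cdot>\<^sub>v v) = (1 / \<sigma>\<^sup>2) * scalar_prod v v"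
    using v by (intro scalar_prod_smult_distrib) auto
  finally show ?thesis .
qed

definition goodu :: "nat \<Rightarrow> (nat \<Rightarrow> real) \<Rightarrow> bool" where
  "goodu N u \<longleftrightarrow> (\<forall>i\<in>{1..N}. 0 < u i)"

lemma M_det:
  assumes g: "goodu N u" and s: "\<sigma> > 0"
  shows "Determinant.det (Mmat N p x y \<sigma> k u) \<noteq> 0"
proof
  assume "Determinant.det (Mmat N p x y \<sigma> k u) = 0"
  then obtain v where v: "v \<in> carrier_vec (p+k)" "v \<noteq> 0\<^sub>v (p+k)" "Mmat N p x y \<sigma> k u *\<^sub>v v = 0\<^sub>v (p+k)"
    using det_0_iff_vec_prod_zero[OF Mmat_carrier] by blast
  have "scalar_prod v (Mmat N p x y \<sigma> k u *\<^sub>v v) = 0" using v by simp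
  moreover have "(\<Sum>i<N. u (i+1) * ((Wmat N p x y k *\<^sub>v v) $ i)^2) \<ge> 0"
    using g by (intro sum_nonneg mult_nonneg_nonneg) (auto simp: goodu_def less_imp_le)
  moreover have "(1 / \<sigma>\<^sup>2) * scalar_prod v v > 0" using self_scalar_pos[OF v(1,2)] s by simp
  ultimately show False using M_quad[OF v(1), of N x y \<sigma> u] by linarith
qed

lemma mat_inverse_not_None:
  fixes A :: "real mat"
  assumes A: "A \<in> carrier_mat n n" and d: "Determinant.det A \<noteq> 0"
  shows "mat_inverse A \<noteq> None"
proof -
  let ?B = "(1 / Determinant.det A) \<cdot>\<^sub>m adj_mat A"
  have Bc: "?B \<in> carrier_mat n n" using adj_mat(1)[OF A] by auto
  have AB: "A * ?B = 1\<^sub>m n" using adj_mat(2)[OF A] A d adj_mat(1)[OF A]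
    apply (simp add: mult_smult_distrib)
    by (intro eq_matI) auto
  have BA: "?B * A = 1\<^sub>m n" using adj_mat(3)[OF A] A d adj_mat(1)[OF A]
    apply (simp add: mult_smult_assoc_mat)
    by (intro eq_matI) auto
  have "A \<in> Units (ring_mat TYPE(real) n (undefined::unit))"
    using AB BA Bc A unfolding Units_def ring_mat_def by auto
  thus ?thesis using mat_inverse(1)[OF A, of "undefined::unit"] by blast
qed

lemma Minv_props:
  assumes g: "goodu N u" and s: "\<sigma> > 0"
  shows "Mmat N p x y \<sigma> k u * Minv N p x y \<sigma> k u = 1\<^sub>m (p+k)"
    "Minv N p x y \<sigma> k u \<in> carrier_mat (p+k) (p+k)"
    "Determinant.det (Minv N p x y \<sigma> k u) \<noteq> 0"
proof -
  obtain B where B: "mat_inverse (Mmat N p x y \<sigma> k u) = Some B"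
    using mat_inverse_not_None[OF Mmat_carrier M_det[OF g s, where p=p and x=x and y=y and k=k]] by auto
  have e: "Minv N p x y \<sigma> k u = B" using B by (simp add: Minv_def)
  from mat_inverse(2)[OF Mmat_carrier B]
  show 1: "Mmat N p x y \<sigma> k u * Minv N p x y \<sigma> k u = 1\<^sub>m (p+k)"
    and 2: "Minv N p x y \<sigma> k u \<in> carrier_mat (p+k) (p+k)" using e by auto
  have "Determinant.det (Mmat N p x y \<sigma> k u) * Determinant.det (Minv N p x y \<sigma> k u) = 1"
    using det_mult[OF Mmat_carrier[where N=N and p=p and x=x and y=y and \<sigma>=\<sigma> and k=k and u=u] 2] 1 by simp
  thus "Determinant.det (Minv N p x y \<sigma> k u) \<noteq> 0" by auto
qed

lemma ig_scale_pos:
  assumes g: "goodu N u" and s: "\<sigma> > 0" and yne: "\<exists>i\<in>{1..N}. y (int i) \<noteq> 0"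
  shows "ig_scale N p x y \<sigma> k u > 0"
proof -
  let ?W = "Wmat N p x y k" and ?Q = "Qmat N u" and ?Y = "yvec N y"
    and ?B = "Minv N p x y \<sigma> k u" and ?M = "Mmat N p x y \<sigma> k u"
  define Qy where "Qy = ?Q *\<^sub>v ?Y"
  define b where "b = transpose_mat ?W *\<^sub>v Qy"
  define z where "z = ?B *\<^sub>v b"
  define w where "w = ?W *\<^sub>v z"
  define c where "c = 1 / \<sigma>\<^sup>2"
  have Qyc: "Qy \<in> carrier_vec N" unfolding Qy_def by (rule mult_mat_vec_carrier[OF Qmat_carrier yvec_carrier])
  have bc: "b \<in> carrier_vec (p+k)" unfolding b_def by (rule mult_mat_vec_carrier[OF _ Qyc]) simp
  have zc: "z \<in> carrier_vec (p+k)" unfolding z_def by (rule mult_mat_vec_carrier[OF Minv_props(2)[OF g s] bc])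
  have wc: "w \<in> carrier_vec N" unfolding w_def by (rule mult_mat_vec_carrier[OF Wmat_carrier zc])
  have Mz: "?M *\<^sub>v z = b"
  proof -
    have "?M *\<^sub>v z = (?M * ?B) *\<^sub>v b" unfolding z_def
      by (rule assoc_mult_mat_vec[symmetric, OF Mmat_carrier Minv_props(2)[OF g s] bc])
    thus ?thesis using Minv_props(1)[OF g s] bc by simp
  qed
  have sc: "ig_scale N p x y \<sigma> k u = (scalar_prod ?Y Qy - scalar_prod b z) / 2"
    unfolding ig_scale_def Let_def Qy_def b_def z_def by simp
  define S1 where "S1 = (\<Sum>i<N. u (i+1) * ?Y $ i * ?Y $ i)"
  define S2 where "S2 = (\<Sum>i<N. u (i+1) * w $ i * ?Y $ i)"
  define S3 where "S3 = (\<Sum>i<N. u (i+1) * (w $ i)^2)"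
  have f4: "scalar_prod ?Y Qy = S1" unfolding Qy_def S1_def by (rule Q_quad) auto
  have f1: "scalar_prod b z = scalar_prod z b" using bc zc by (rule comm_scalar_prod)
  have f2: "scalar_prod z b = S3 + c * scalar_prod z z"
    using M_quad[OF zc, of N x y \<sigma> u] Mz unfolding S3_def c_def w_def by simp
  have f3: "scalar_prod b z = S2"
  proof -
    have "scalar_prod b z = scalar_prod Qy w"
      unfolding b_def w_def by (rule transpose_vec_mult_scalar[OF Wmat_carrier zc Qyc])
    also have "\<dots> = scalar_prod w Qy" using Qyc wc by (rule comm_scalar_prod)
    also have "\<dots> = S2" unfolding Qy_def S2_def using wc by (intro Q_quad) auto
    finally show ?thesis .
  qed
  have expand: "(\<Sum>i<N. u (i+1) * (?Y $ i - w $ i)^2) = S1 - 2 * S2 + S3"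
    unfolding S1_def S2_def S3_def
    by (simp add: power2_eq_square algebra_simps sum.distrib sum_subtractf sum_distrib_left)
  have main: "2 * ig_scale N p x y \<sigma> k u = (\<Sum>i<N. u (i+1) * (?Y $ i - w $ i)^2) + c * scalar_prod z z"
    using sc f1 f2 f3 f4 expand by simp
  have nn: "(\<Sum>i<N. u (i+1) * (?Y $ i - w $ i)^2) \<ge> 0"
    using g by (intro sum_nonneg mult_nonneg_nonneg) (auto simp: goodu_def less_imp_le)
  have cpos: "c > 0" using s unfolding c_def by simp
  show ?thesis
  proof (cases "z = 0\<^sub>v (p+k)")
    case False
    hence "c * scalar_prod z z > 0" using self_scalar_pos[OF zc False] cpos by simp
    thus ?thesis using main nn by linarith
  next
    case True
    hence "scalar_prod b z = 0" using bc by simp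
    hence "2 * ig_scale N p x y \<sigma> k u = S1" using sc f4 by simp
    moreover have "S1 > 0"
    proof -
      obtain i where i: "i \<in> {1..N}" "y (int i) \<noteq> 0" using yne by auto
      define j where "j = i - 1"
      have j: "j < N" "?Y $ j = y (int i)" using i unfolding j_def by (auto simp: yvec_def)
      have "u (j+1) * ?Y $ j * ?Y $ j > 0"
        using j i g unfolding goodu_def j_def by (auto simp: mult.assoc zero_less_mult_iff)
      moreover have "u (j+1) * ?Y $ j * ?Y $ j \<le> S1"
        unfolding S1_def using j g
        by (intro member_le_sum) (auto simp: goodu_def mult.assoc less_imp_le)
      ultimately show ?thesis by linarith
    qed
    ultimately show ?thesis by linarith
  qed
qed

lemma mmeas_Q:
  assumes U: "\<And>i. i \<in> {1..N} \<Longrightarrow> (\<lambda>z. U z i) \<in> borel_measurable M"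
  shows "mmeas M (\<lambda>z. Qmat N (U z)) N N"
  unfolding Qmat_def
proof (rule mmeas_mat)
  fix i j assume ij: "i < N" "j < N"
  show "(\<lambda>z. (\<lambda>(i, j). if i = j then U z (i + 1) else 0) (i, j)) \<in> borel_measurable M"
    using U[of "i+1"] ij by (cases "i = j") auto
qed

lemma mmeas_M:
  assumes U: "\<And>i. i \<in> {1..N} \<Longrightarrow> (\<lambda>z. U z i) \<in> borel_measurable M"
  shows "mmeas M (\<lambda>z. Mmat N p x y \<sigma> k (U z)) (p+k) (p+k)"
proof -
  have Q: "mmeas M (\<lambda>z. Qmat N (U z)) N N" by (rule mmeas_Q[OF U])
  have W: "mmeas M (\<lambda>_. Wmat N p x y k) N (p+k)" by (rule mmeas_const) simp
  have WT: "mmeas M (\<lambda>_. transpose_mat (Wmat N p x y k)) (p+k) N" by (rule mmeas_const) simp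
  have I: "mmeas M (\<lambda>_. (1 / \<sigma>\<^sup>2) \<cdot>\<^sub>m 1\<^sub>m (p + k)) (p+k) (p+k)" by (rule mmeas_const) simp
  show ?thesis unfolding Mmat_def by (rule mmeas_add[OF mmeas_mult[OF mmeas_mult[OF WT Q] W] I])
qed

lemma mmeas_Minv:
  assumes U: "\<And>i. i \<in> {1..N} \<Longrightarrow> (\<lambda>z. U z i) \<in> borel_measurable M"
    and G: "\<And>z. z \<in> space M \<Longrightarrow> goodu N (U z)" and s: "\<sigma> > 0"
  shows "mmeas M (\<lambda>z. Minv N p x y \<sigma> k (U z)) (p+k) (p+k)"
  unfolding Minv_def
  apply (rule mmeas_inverse[OF mmeas_M[OF U]])
  using M_det[OF G s] by auto

lemma ig_scale_meas:
  assumes U: "\<And>i. i \<in> {1..N} \<Longrightarrow> (\<lambda>z. U z i) \<in> borel_measurable M"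
    and G: "\<And>z. z \<in> space M \<Longrightarrow> goodu N (U z)" and s: "\<sigma> > 0"
  shows "(\<lambda>z. ig_scale N p x y \<sigma> k (U z)) \<in> borel_measurable M"
proof -
  have Qy: "vmeas M (\<lambda>z. Qmat N (U z) *\<^sub>v yvec N y) N"
    by (rule vmeas_mult[OF mmeas_Q[OF U] vmeas_const[OF yvec_carrier]])
  have WT: "mmeas M (\<lambda>_. transpose_mat (Wmat N p x y k)) (p+k) N" by (rule mmeas_const) simp
  have b: "vmeas M (\<lambda>z. transpose_mat (Wmat N p x y k) *\<^sub>v (Qmat N (U z) *\<^sub>v yvec N y)) (p+k)"
    by (rule vmeas_mult[OF WT Qy])
  have Y: "vmeas M (\<lambda>_. yvec N y) N" by (rule vmeas_const) simp
  have "(\<lambda>z. (scalar_prod (yvec N y) (Qmat N (U z) *\<^sub>v yvec N y)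
     - scalar_prod (transpose_mat (Wmat N p x y k) *\<^sub>v (Qmat N (U z) *\<^sub>v yvec N y))
        (Minv N p x y \<sigma> k (U z) *\<^sub>v (transpose_mat (Wmat N p x y k) *\<^sub>v (Qmat N (U z) *\<^sub>v yvec N y)))) / 2)
     \<in> borel_measurable M"
    by (intro borel_measurable_divide borel_measurable_diff borel_measurable_const scalar_prod_meas[OF Y Qy]
        scalar_prod_meas[OF b vmeas_mult[OF mmeas_Minv[OF U G s] b]])
  thus ?thesis unfolding ig_scale_def Let_def .
qed

lemma post_mean_meas:
  assumes U: "\<And>i. i \<in> {1..N} \<Longrightarrow> (\<lambda>z. U z i) \<in> borel_measurable M"
    and G: "\<And>z. z \<in> space M \<Longrightarrow> goodu N (U z)" and s: "\<sigma> > 0"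
  shows "vmeas M (\<lambda>z. post_mean N p x y \<sigma> k (U z)) (p+k)"
proof -
  have Qy: "vmeas M (\<lambda>z. Qmat N (U z) *\<^sub>v yvec N y) N"
    by (rule vmeas_mult[OF mmeas_Q[OF U] vmeas_const[OF yvec_carrier]])
  have WT: "mmeas M (\<lambda>_. transpose_mat (Wmat N p x y k)) (p+k) N" by (rule mmeas_const) simp
  show ?thesis unfolding post_mean_def
    by (rule vmeas_mult[OF mmeas_Minv[OF U G s] vmeas_mult[OF WT Qy]])
qed

lemma IG_meas:
  assumes U: "\<And>i. i \<in> {1..N} \<Longrightarrow> (\<lambda>z. U z i) \<in> borel_measurable M"
    and G: "\<And>z. z \<in> space M \<Longrightarrow> goodu N (U z)" and s: "\<sigma> > 0"
    and T: "T \<in> borel_measurable M"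
  shows "(\<lambda>z. inv_gamma_density (real N / 2) (ig_scale N p x y \<sigma> k (U z)) (T z)) \<in> borel_measurable M"
proof -
  note [measurable] = ig_scale_meas[OF U G s] T
  show ?thesis unfolding inv_gamma_density_def by measurable
qed

lemma PHI_meas:
  assumes U: "\<And>i. i \<in> {1..N} \<Longrightarrow> (\<lambda>z. U z i) \<in> borel_measurable M"
    and G: "\<And>z. z \<in> space M \<Longrightarrow> goodu N (U z)" and s: "\<sigma> > 0"
    and T: "T \<in> borel_measurable M" and Tpos: "\<And>z. z \<in> space M \<Longrightarrow> T z > 0"
    and V: "vmeas M V (p+k)"
  shows "(\<lambda>z. mvnormal_density (p+k) (post_mean N p x y \<sigma> k (U z))
            (T z \<cdot>\<^sub>m Minv N p x y \<sigma> k (U z)) (V z)) \<in> borel_measurable M"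
proof -
  have S: "mmeas M (\<lambda>z. T z \<cdot>\<^sub>m Minv N p x y \<sigma> k (U z)) (p+k) (p+k)"
    by (rule mmeas_smult[OF T mmeas_Minv[OF U G s]])
  have dS: "Determinant.det (T z \<cdot>\<^sub>m Minv N p x y \<sigma> k (U z)) \<noteq> 0" if z: "z \<in> space M" for z
    using Minv_props(2,3)[OF G[OF z] s, where p=p and x=x and y=y and k=k] Tpos[OF z] by simp
  have D: "vmeas M (\<lambda>z. V z - post_mean N p x y \<sigma> k (U z)) (p+k)"
    by (rule vmeas_minus[OF V post_mean_meas[OF U G s]])
  note [measurable] = det_meas[OF S]
    scalar_prod_meas[OF D vmeas_mult[OF mmeas_inverse[OF S dS] D]]
  show ?thesis unfolding mvnormal_density_def by measurable
qed

definition gfun :: "nat \<Rightarrow> real \<Rightarrow> (nat \<Rightarrow> real) \<Rightarrow> real" where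
  "gfun N d u = (\<Prod>i=1..N. if 0 < u i then (8 * pi * (u i)^3) powr (-1/2) *
        exp (- u i * d / 2 - 1 / (8 * u i)) else 0)"

lemma aux_ineq: "(a::real) \<le> b \<Longrightarrow> 0 \<le> e \<Longrightarrow> - (b / 2) - c \<le> - (a / 2) + e - c"
  by linarith

lemma g_le_fU:
  assumes t: "\<tau> > 0" and V: "(1 / \<tau>) * (\<Sum>i=1..N. (resid p x y k \<alpha> \<beta> i)\<^sup>2) \<le> d"
  shows "gfun N d u \<le> fU N p x y k (\<alpha>, \<beta>, \<tau>) u"
  unfolding fU_def gfun_def prod.case
proof (rule prod_mono, intro conjI)
  fix i assume i: "i \<in> {1..N}"
  let ?r = "resid p x y k \<alpha> \<beta> i"
  show "0 \<le> (if 0 < u i then (8 * pi * (u i)^3) powr (-1/2) * exp (- u i * d / 2 - 1 / (8 * u i)) else 0)"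
    by simp
  show "(if 0 < u i then (8 * pi * (u i)^3) powr (-1/2) * exp (- u i * d / 2 - 1 / (8 * u i)) else 0)
    \<le> (if u i > 0 then (8 * pi * (u i)^3) powr (-1/2) *
        exp (- u i * ?r\<^sup>2 / (2 * \<tau>) + \<bar>?r\<bar> / (2 * sqrt \<tau>) - 1 / (8 * u i)) else 0)"
  proof (cases "0 < u i")
    case True
    have "?r\<^sup>2 \<le> (\<Sum>i=1..N. (resid p x y k \<alpha> \<beta> i)\<^sup>2)"
      using i by (intro member_le_sum) auto
    hence "?r\<^sup>2 / \<tau> \<le> d" using V t by (simp add: divide_right_mono field_simps)
    hence h: "u i * (?r\<^sup>2 / \<tau>) \<le> u i * d" using True by (intro mult_left_mono) auto
    have eq1: "- u i * ?r\<^sup>2 / (2 * \<tau>) = - (u i * (?r\<^sup>2 / \<tau>) / 2)" by simp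
    have eq2: "- u i * d / 2 = - (u i * d / 2)" by simp
    have e: "0 \<le> \<bar>?r\<bar> / (2 * sqrt \<tau>)" using t by (intro divide_nonneg_nonneg) auto
    have key: "- (u i * d / 2) - 1 / (8 * u i) \<le> - (u i * (?r\<^sup>2 / \<tau>) / 2) + \<bar>?r\<bar> / (2 * sqrt \<tau>) - 1 / (8 * u i)"
      by (rule aux_ineq[OF h e])
    have "- u i * d / 2 - 1 / (8 * u i) \<le> - u i * ?r\<^sup>2 / (2 * \<tau>) + \<bar>?r\<bar> / (2 * sqrt \<tau>) - 1 / (8 * u i)"
      by (subst eq1, subst eq2, rule key)
    thus ?thesis using True by (simp add: mult_left_mono)
  qed simp
qed

lemma sf_PiM_lborel: "finite I \<Longrightarrow> sigma_finite_measure (PiM I (\<lambda>_. lborel :: real measure))"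
proof -
  assume "finite I"
  interpret product_sigma_finite "\<lambda>_::'a. lborel :: real measure" by standard
  show ?thesis by (rule sigma_finite) fact
qed

lemma main_fixed:
  fixes N p kmax k :: nat
    and x :: "nat \<Rightarrow> nat \<Rightarrow> real"
    and y :: "int \<Rightarrow> real"
    and \<sigma> d :: real
  assumes N1: "N \<ge> 1" and p1: "p \<ge> 1" and sig: "\<sigma> > 0"
    and yne: "\<exists>i\<in>{1..N}. y (int i) \<noteq> 0" and d: "d > 0"
  shows "\<exists>\<nu>. sets \<nu> = sets (state_space p k) \<and> emeasure \<nu> (space \<nu>) \<noteq> 0 \<and>
           (\<forall>s\<in>space (state_space p k). V_fun N p x y k s \<le> d \<longrightarrow>
              (\<forall>A\<in>sets (state_space p k). emeasure \<nu> A \<le> Pk N p x y \<sigma> k s A))"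
proof -
  define PU where "PU = PiM {1..N} (\<lambda>_. lborel :: real measure)"
  define PT where "PT = PiM {..<p+k} (\<lambda>_. lborel :: real measure)"
  define P where "P = PU \<Otimes>\<^sub>M ((lborel :: real measure) \<Otimes>\<^sub>M PT)"
  define S where "S = state_space p k"
  define goodz where "goodz = (\<lambda>z::(nat\<Rightarrow>real)\<times>real\<times>(nat\<Rightarrow>real). goodu N (fst z) \<and> 0 < fst (snd z))"
  define IG where "IG = (\<lambda>u t. inv_gamma_density (real N / 2) (ig_scale N p x y \<sigma> k u) t)"
  define PH where "PH = (\<lambda>u t \<theta>. mvnormal_density (p+k) (post_mean N p x y \<sigma> k u)
                          (t \<cdot>\<^sub>m Minv N p x y \<sigma> k u) (Matrix.vec (p+k) \<theta>))"
  define D0 where "D0 = (\<lambda>z. if goodz z then ennreal (IG (fst z) (fst (snd z))) *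
                             ennreal (PH (fst z) (fst (snd z)) (snd (snd z))) else 0)"
  define D where "D = (\<lambda>z. ennreal (gfun N d (fst z)) * D0 z)"
  define F where "F = (\<lambda>z::(nat\<Rightarrow>real)\<times>real\<times>(nat\<Rightarrow>real).
     (restrict (\<lambda>l. snd (snd z) (p+l)) {..<k}, restrict (snd (snd z)) {..<p},
      if 0 < fst (snd z) then fst (snd z) else 1))"
  define \<nu> where "\<nu> = distr (density P D) S F"

  have sfPT: "sigma_finite_measure PT" unfolding PT_def by (rule sf_PiM_lborel) simp
  have sfPU: "sigma_finite_measure PU" unfolding PU_def by (rule sf_PiM_lborel) simp
  have sfLT: "sigma_finite_measure ((lborel :: real measure) \<Otimes>\<^sub>M PT)"
    by (rule sigma_finite_pair_measure[OF _ sfPT]) (rule lborel.sigma_finite_measure_axioms)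

  have mF: "F \<in> measurable P S"
    unfolding F_def S_def state_space_def
  proof (intro measurable_Pair)
    show "(\<lambda>z. restrict (\<lambda>l. snd (snd z) (p + l)) {..<k}) \<in> measurable P (PiM {..<k} (\<lambda>_. lborel))"
      unfolding P_def PT_def by measurable
    show "(\<lambda>z. restrict (snd (snd z)) {..<p}) \<in> measurable P (PiM {..<p} (\<lambda>_. lborel))"
      unfolding P_def PT_def by measurable
    show "(\<lambda>z. if 0 < fst (snd z) then fst (snd z) else 1) \<in> measurable P (restrict_space lborel {0<..})"
      by (rule measurable_restrict_space2) (auto simp: P_def)
  qed

  have Gset: "{z \<in> space P. goodz z} \<in> sets P"
    unfolding goodz_def goodu_def P_def PU_def by measurable

  have mD0: "D0 \<in> borel_measurable P"
    unfolding D0_def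
  proof (subst measurable_If_restrict_space_iff[OF Gset], intro conjI)
    let ?R = "restrict_space P {z. goodz z}"
    have U: "(\<lambda>z. fst z i) \<in> borel_measurable ?R" if "i \<in> {1..N}" for i
      by (rule measurable_restrict_space1) (use that in \<open>simp add: P_def PU_def, measurable\<close>)
    have G: "goodu N (fst z)" if "z \<in> space ?R" for z
      using that by (auto simp: space_restrict_space goodz_def)
    have T: "(\<lambda>z. fst (snd z)) \<in> borel_measurable ?R"
      by (rule measurable_restrict_space1) (simp add: P_def)
    have Tp: "fst (snd z) > 0" if "z \<in> space ?R" for z
      using that by (auto simp: space_restrict_space goodz_def)
    have V: "vmeas ?R (\<lambda>z. Matrix.vec (p+k) (snd (snd z))) (p+k)"
      by (rule vmeas_vec, rule measurable_restrict_space1) (simp add: P_def PT_def)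
    have "(\<lambda>z. ennreal (IG (fst z) (fst (snd z))) * ennreal (PH (fst z) (fst (snd z)) (snd (snd z))))
       \<in> borel_measurable ?R"
    proof -
      have m1: "(\<lambda>z. IG (fst z) (fst (snd z))) \<in> borel_measurable ?R"
        unfolding IG_def
        by (rule IG_meas[where U=fst and T="\<lambda>z. fst (snd z)", OF U G sig T])
      have m2: "(\<lambda>z. PH (fst z) (fst (snd z)) (snd (snd z))) \<in> borel_measurable ?R"
        unfolding PH_def
        by (rule PHI_meas[where U=fst and T="\<lambda>z. fst (snd z)", OF U G sig T Tp V])
      note [measurable] = m1 m2
      show ?thesis by measurable
    qed
    thus "(\<lambda>z. ennreal (IG (fst z) (fst (snd z))) * ennreal (PH (fst z) (fst (snd z)) (snd (snd z))))
       \<in> borel_measurable ?R" .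
  qed simp

  have mg: "(\<lambda>z. ennreal (gfun N d (fst z))) \<in> borel_measurable P"
    unfolding gfun_def P_def PU_def by measurable
  have mD: "D \<in> borel_measurable P"
    unfolding D_def using mg mD0 by measurable

  have secs: "(\<lambda>\<theta>. H (u, t, \<theta>)) \<in> borel_measurable PT \<and> (\<lambda>t. \<integral>\<^sup>+\<theta>. H (u, t, \<theta>) \<partial>PT) \<in> borel_measurable lborel"
    if H: "H \<in> borel_measurable P" and u: "u \<in> space PU" for H u t
  proof -
    have s1: "(\<lambda>w. H (u, w)) \<in> borel_measurable (lborel \<Otimes>\<^sub>M PT)"
      using measurable_Pair2[OF H[unfolded P_def] u] by simp
    have "(\<lambda>\<theta>. H (u, t, \<theta>)) \<in> borel_measurable PT"
      using measurable_Pair2[OF s1, of t] by simp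
    moreover have "(\<lambda>t. \<integral>\<^sup>+\<theta>. H (u, t, \<theta>) \<partial>PT) \<in> borel_measurable lborel"
      using sigma_finite_measure.borel_measurable_nn_integral_fst[OF sfPT s1] by simp
    ultimately show ?thesis ..
  qed

  have mF': "F \<in> measurable (density P D) S"
    using mF by (subst measurable_cong_sets[OF sets_density refl])
  have nu_eq: "emeasure \<nu> A = (\<integral>\<^sup>+u. \<integral>\<^sup>+t. \<integral>\<^sup>+\<theta>. D (u, t, \<theta>) * indicator A (F (u, t, \<theta>)) \<partial>PT \<partial>lborel \<partial>PU)"
    if A: "A \<in> sets S" for A
  proof -
    have mI: "(\<lambda>z. D z * indicator A (F z)) \<in> borel_measurable P" using mD mF A by measurable
    have "emeasure \<nu> A = emeasure (density P D) (F -` A \<inter> space P)"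
      unfolding \<nu>_def by (subst emeasure_distr[OF mF' A]) simp
    also have "\<dots> = (\<integral>\<^sup>+z. D z * indicator (F -` A \<inter> space P) z \<partial>P)"
      by (rule emeasure_density[OF mD measurable_sets[OF mF A]])
    also have "\<dots> = (\<integral>\<^sup>+z. D z * indicator A (F z) \<partial>P)"
      by (intro nn_integral_cong) (auto simp: indicator_def)
    also have "\<dots> = (\<integral>\<^sup>+u. \<integral>\<^sup>+w. D (u, w) * indicator A (F (u, w)) \<partial>(lborel \<Otimes>\<^sub>M PT) \<partial>PU)"
      using sigma_finite_measure.nn_integral_fst[OF sfLT, of "\<lambda>z. D z * indicator A (F z)" PU] mI
      unfolding P_def by simp
    also have "\<dots> = (\<integral>\<^sup>+u. \<integral>\<^sup>+t. \<integral>\<^sup>+\<theta>. D (u, t, \<theta>) * indicator A (F (u, t, \<theta>)) \<partial>PT \<partial>lborel \<partial>PU)"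
    proof (rule nn_integral_cong)
      fix u assume u: "u \<in> space PU"
      have "(\<lambda>w. D (u, w) * indicator A (F (u, w))) \<in> borel_measurable (lborel \<Otimes>\<^sub>M PT)"
        using measurable_Pair2[OF mI[unfolded P_def] u] by simp
      thus "(\<integral>\<^sup>+w. D (u, w) * indicator A (F (u, w)) \<partial>(lborel \<Otimes>\<^sub>M PT)) =
            (\<integral>\<^sup>+t. \<integral>\<^sup>+\<theta>. D (u, t, \<theta>) * indicator A (F (u, t, \<theta>)) \<partial>PT \<partial>lborel)"
        using sigma_finite_measure.nn_integral_fst[OF sfPT, of "\<lambda>w. D (u, w) * indicator A (F (u, w))" lborel]
        by simp
    qed
    finally show ?thesis .
  qed

  have pos_IG: "IG u t > 0" if "goodu N u" "t > 0" for u t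
  proof -
    have "ig_scale N p x y \<sigma> k u > 0" by (rule ig_scale_pos[OF that(1) sig yne])
    moreover have "Gamma (real N / 2) > 0" using N1 by (intro Gamma_real_pos) simp
    ultimately show ?thesis using that(2) unfolding IG_def inv_gamma_density_def by simp
  qed
  have pos_PH: "PH u t \<theta> > 0" if "goodu N u" "t > 0" for u t \<theta>
  proof -
    have "Determinant.det (t \<cdot>\<^sub>m Minv N p x y \<sigma> k u) \<noteq> 0"
      using Minv_props(2,3)[OF that(1) sig, where p=p and x=x and y=y and k=k] that(2) by simp
    thus ?thesis unfolding PH_def mvnormal_density_def by simp
  qed

  have nonzero: "emeasure \<nu> (space \<nu>) \<noteq> 0"
  proof
    assume z: "emeasure \<nu> (space \<nu>) = 0"
    have "space \<nu> = space S" unfolding \<nu>_def by simp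
    hence "emeasure \<nu> (space \<nu>) = emeasure (density P D) (F -` space S \<inter> space P)"
      unfolding \<nu>_def by (subst emeasure_distr[OF mF']) simp_all
    also have "F -` space S \<inter> space P = space P" using measurable_space[OF mF] by auto
    also have "emeasure (density P D) (space P) = (\<integral>\<^sup>+z. D z * indicator (space P) z \<partial>P)"
      by (rule emeasure_density[OF mD]) simp
    also have "\<dots> = integral\<^sup>N P D" by (intro nn_integral_cong) (auto simp: indicator_def)
    finally have "integral\<^sup>N P D = 0" using z by simp
    hence E0: "emeasure P {z \<in> space P. D z \<noteq> 0} = 0" using nn_integral_0_iff[OF mD] by simp
    define G0 where "G0 = (PiE {1..N} (\<lambda>_. {1<..<2::real})) \<times> ({1<..<2::real} \<times> PiE {..<p+k} (\<lambda>_. {0<..<1::real}))"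
    have G0s: "G0 \<in> sets P" unfolding G0_def P_def PU_def PT_def
      by (intro pair_measureI sets_PiM_I_finite) auto
    have G0sub: "G0 \<subseteq> {z \<in> space P. D z \<noteq> 0}"
    proof
      fix z assume zG: "z \<in> G0"
      obtain u t \<theta> where zz: "z = (u, t, \<theta>)" by (cases z) auto
      have u: "u \<in> PiE {1..N} (\<lambda>_. {1<..<2::real})" and t: "t \<in> {1<..<2::real}"
        using zG zz unfolding G0_def by auto
      have gu: "goodu N u" using u unfolding goodu_def by (auto simp: PiE_def Pi_def)
      have "gfun N d u > 0" unfolding gfun_def
      proof (intro prod_pos)
        fix a assume a: "a \<in> {1..N}"
        hence ua: "u a > 0" using gu by (auto simp: goodu_def)
        hence "8 * pi * (u a)^3 \<noteq> 0" by simp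
        thus "0 < (if 0 < u a then (8 * pi * (u a)^3) powr (-1/2) * exp (- u a * d / 2 - 1 / (8 * u a)) else 0)"
          using ua by simp
      qed
      moreover have "IG u t > 0" "PH u t \<theta> > 0" using pos_IG[OF gu] pos_PH[OF gu] t by auto
      moreover have "goodz z" using gu t zz unfolding goodz_def by simp
      ultimately have "D z \<noteq> 0" unfolding D_def D0_def zz by simp
      moreover have "z \<in> space P" using sets.sets_into_space[OF G0s] zG by auto
      ultimately show "z \<in> {z \<in> space P. D z \<noteq> 0}" by simp
    qed
    have "emeasure P G0 = 1"
    proof -
      interpret pl: product_sigma_finite "\<lambda>_::nat. lborel :: real measure" by standard
      have "emeasure PU (PiE {1..N} (\<lambda>_. {1<..<2::real})) = 1"
        unfolding PU_def by (subst pl.emeasure_PiM) auto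
      moreover have "emeasure PT (PiE {..<p+k} (\<lambda>_. {0<..<1::real})) = 1"
        unfolding PT_def by (subst pl.emeasure_PiM) auto
      moreover have "emeasure (lborel \<Otimes>\<^sub>M PT) ({1<..<2::real} \<times> PiE {..<p+k} (\<lambda>_. {0<..<1::real})) =
          emeasure lborel {1<..<2::real} * emeasure PT (PiE {..<p+k} (\<lambda>_. {0<..<1::real}))"
        by (rule sigma_finite_measure.emeasure_pair_measure_Times[OF sfPT]) (auto simp: PT_def intro!: sets_PiM_I_finite)
      moreover have "emeasure P G0 = emeasure PU (PiE {1..N} (\<lambda>_. {1<..<2::real})) *
          emeasure (lborel \<Otimes>\<^sub>M PT) ({1<..<2::real} \<times> PiE {..<p+k} (\<lambda>_. {0<..<1::real}))"
        unfolding P_def G0_def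
        by (rule sigma_finite_measure.emeasure_pair_measure_Times[OF sfLT])
           (auto simp: PU_def PT_def intro!: sets_PiM_I_finite pair_measureI)
      ultimately show ?thesis by simp
    qed
    moreover have "emeasure P G0 \<le> emeasure P {z \<in> space P. D z \<noteq> 0}"
      by (rule emeasure_mono[OF G0sub]) (use mD in measurable)
    ultimately show False using E0 by simp
  qed

  show ?thesis
  proof (intro exI[of _ \<nu>] conjI ballI impI)
    show "sets \<nu> = sets (state_space p k)" unfolding \<nu>_def S_def by simp
    show "emeasure \<nu> (space \<nu>) \<noteq> 0" by (rule nonzero)
    fix s A assume s: "s \<in> space (state_space p k)" and V: "V_fun N p x y k s \<le> d"
      and A: "A \<in> sets (state_space p k)"
    obtain \<alpha> \<beta> \<tau> where ss: "s = (\<alpha>, \<beta>, \<tau>)" by (cases s) auto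
    have \<tau>: "\<tau> > 0" using s ss by (auto simp: state_space_def space_pair_measure space_restrict_space)
    have fg: "gfun N d u \<le> fU N p x y k s u" for u
      using g_le_fU[OF \<tau>, of p x y k \<alpha> \<beta> N d u] V ss by (simp add: V_fun_def)
    have AS: "A \<in> sets S" using A S_def by simp
    define H where "H = (\<lambda>z. D0 z * indicator A (F z))"
    have mI0: "H \<in> borel_measurable P" unfolding H_def using mD0 mF AS by measurable
    have mG: "(\<lambda>\<theta>. (restrict (\<lambda>l. \<theta> (p+l)) {..<k}, restrict \<theta> {..<p}, t)) \<in> measurable PT S"
      if t: "t > 0" for t
      unfolding S_def state_space_def
    proof (intro measurable_Pair)
      show "(\<lambda>\<theta>. restrict (\<lambda>l. \<theta> (p + l)) {..<k}) \<in> measurable PT (PiM {..<k} (\<lambda>_. lborel))"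
        unfolding PT_def by measurable
      show "(\<lambda>\<theta>. restrict \<theta> {..<p}) \<in> measurable PT (PiM {..<p} (\<lambda>_. lborel))"
        unfolding PT_def by measurable
      show "(\<lambda>\<theta>. t) \<in> measurable PT (restrict_space lborel {0<..})"
        using t by (intro measurable_const) (simp add: space_restrict_space)
    qed
    have claim: "(\<integral>\<^sup>+t. \<integral>\<^sup>+\<theta>. D (u, t, \<theta>) * indicator A (F (u, t, \<theta>)) \<partial>PT \<partial>lborel) \<le>
      ennreal (fU N p x y k s u) * (\<integral>\<^sup>+t. ennreal (IG u t) * (\<integral>\<^sup>+\<theta>. ennreal (PH u t \<theta>) *
          indicator A (restrict (\<lambda>l. \<theta> (p + l)) {..<k}, restrict \<theta> {..<p}, t) \<partial>PT) \<partial>lborel)"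
      if u: "u \<in> space PU" for u
    proof (cases "goodu N u")
      case False
      hence "\<And>t \<theta>. D (u, t, \<theta>) = 0" by (simp add: D_def D0_def goodz_def)
      thus ?thesis by simp
    next
      case good: True
      have eqD: "D (u, t, \<theta>) * indicator A (F (u, t, \<theta>)) = ennreal (gfun N d u) * H (u, t, \<theta>)" for t \<theta>
        by (simp add: D_def H_def mult.assoc)
      have "(\<integral>\<^sup>+t. \<integral>\<^sup>+\<theta>. D (u, t, \<theta>) * indicator A (F (u, t, \<theta>)) \<partial>PT \<partial>lborel)
          = (\<integral>\<^sup>+t. ennreal (gfun N d u) * (\<integral>\<^sup>+\<theta>. H (u, t, \<theta>) \<partial>PT) \<partial>lborel)"
        unfolding eqD using secs[OF mI0 u] by (intro nn_integral_cong nn_integral_cmult) auto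
      also have "\<dots> = ennreal (gfun N d u) * (\<integral>\<^sup>+t. \<integral>\<^sup>+\<theta>. H (u, t, \<theta>) \<partial>PT \<partial>lborel)"
        using secs[OF mI0 u] by (intro nn_integral_cmult) auto
      also have "\<dots> \<le> ennreal (fU N p x y k s u) * (\<integral>\<^sup>+t. \<integral>\<^sup>+\<theta>. H (u, t, \<theta>) \<partial>PT \<partial>lborel)"
        by (intro mult_right_mono ennreal_leI fg) simp
      also have "\<dots> \<le> ennreal (fU N p x y k s u) * (\<integral>\<^sup>+t. ennreal (IG u t) * (\<integral>\<^sup>+\<theta>. ennreal (PH u t \<theta>) *
          indicator A (restrict (\<lambda>l. \<theta> (p + l)) {..<k}, restrict \<theta> {..<p}, t) \<partial>PT) \<partial>lborel)"
      proof (intro mult_left_mono nn_integral_mono)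
        fix t :: real
        show "(\<integral>\<^sup>+\<theta>. H (u, t, \<theta>) \<partial>PT) \<le> ennreal (IG u t) * (\<integral>\<^sup>+\<theta>. ennreal (PH u t \<theta>) *
          indicator A (restrict (\<lambda>l. \<theta> (p + l)) {..<k}, restrict \<theta> {..<p}, t) \<partial>PT)"
        proof (cases "t > 0")
          case False
          hence "\<And>\<theta>. H (u, t, \<theta>) = 0" by (simp add: H_def D0_def goodz_def)
          thus ?thesis by simp
        next
          case t: True
          have Heq: "H (u, t, \<theta>) = ennreal (IG u t) * (ennreal (PH u t \<theta>) *
             indicator A (restrict (\<lambda>l. \<theta> (p + l)) {..<k}, restrict \<theta> {..<p}, t))" for \<theta>
            using good t by (simp add: H_def D0_def goodz_def F_def mult.assoc)
          have Vm: "vmeas PT (\<lambda>\<theta>. Matrix.vec (p+k) \<theta>) (p+k)"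
            by (rule vmeas_vec) (simp add: PT_def)
          have mPH: "(\<lambda>\<theta>. PH u t \<theta>) \<in> borel_measurable PT"
            unfolding PH_def
            by (rule PHI_meas[where M=PT and U="\<lambda>_. u" and T="\<lambda>_. t" and V="\<lambda>\<theta>. Matrix.vec (p+k) \<theta>",
                  OF _ _ sig _ _ Vm]) (use good t in auto)
          note [measurable] = mPH mG[OF t]
          have "(\<lambda>\<theta>. ennreal (PH u t \<theta>) *
             indicator A (restrict (\<lambda>l. \<theta> (p + l)) {..<k}, restrict \<theta> {..<p}, t)) \<in> borel_measurable PT"
            using AS by measurable
          thus ?thesis unfolding Heq by (simp add: nn_integral_cmult)
        qed
      qed simp
      finally show ?thesis .
    qed
    have "emeasure \<nu> A \<le> (\<integral>\<^sup>+u. ennreal (fU N p x y k s u) * (\<integral>\<^sup>+t. ennreal (IG u t) * (\<integral>\<^sup>+\<theta>. ennreal (PH u t \<theta>) *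
          indicator A (restrict (\<lambda>l. \<theta> (p + l)) {..<k}, restrict \<theta> {..<p}, t) \<partial>PT) \<partial>lborel) \<partial>PU)"
      unfolding nu_eq[OF AS] by (intro nn_integral_mono claim)
    also have "\<dots> = Pk N p x y \<sigma> k s A"
      unfolding Pk_def IG_def PH_def PU_def PT_def by simp
    finally show "emeasure \<nu> A \<le> Pk N p x y \<sigma> k s A" .
  qed
qed

theorem mainTheorem10:
  fixes N p kmax k :: nat
    and x :: "nat \<Rightarrow> nat \<Rightarrow> real"
    and y :: "int \<Rightarrow> real"
    and \<sigma> :: real
  assumes "N \<ge> 1" and "p \<ge> 1" and "k \<le> kmax" and "\<sigma> > 0"
    and "\<exists>i\<in>{1..N}. y (int i) \<noteq> 0"
  shows "\<forall>d>0. \<exists>\<nu>. sets \<nu> = sets (state_space p k) \<and> emeasure \<nu> (space \<nu>) \<noteq> 0 \<and>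
           (\<forall>s\<in>space (state_space p k). V_fun N p x y k s \<le> d \<longrightarrow>
              (\<forall>A\<in>sets (state_space p k). emeasure \<nu> A \<le> Pk N p x y \<sigma> k s A))"
proof (intro allI impI)
  fix d :: real assume "d > 0"
  show "\<exists>\<nu>. sets \<nu> = sets (state_space p k) \<and> emeasure \<nu> (space \<nu>) \<noteq> 0 \<and>
           (\<forall>s\<in>space (state_space p k). V_fun N p x y k s \<le> d \<longrightarrow>
              (\<forall>A\<in>sets (state_space p k). emeasure \<nu> A \<le> Pk N p x y \<sigma> k s A))"
    by (rule main_fixed) (use assms \<open>d > 0\<close> in auto)
qed

end
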